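(* Let $b>0$, let $q=2b$ be the reducer capacity, and let $X$ and $Y$ be disjoint lists of inputs, each input of size at most $b$; let $sum_x$ and $sum_y$ be the sums of the sizes of the inputs of $X$ and $Y$, respectively, with $sum_x>q$ and $sum_y>q$. Consider the following algorithm: pack the inputs of $X$ into bins of capacity $b$ and the inputs of $Y$ into bins of capacity $b$, using First-Fit Decreasing (or Best-Fit Decreasing); then, for each pair consisting of an $X$-bin and a $Y$-bin, create one reducer receiving all inputs of both bins. The resulting X2Y mapping schema uses at most $\frac{4\cdot sum_x\cdot sum_y}{b^2}$ reducers and has communication cost at most $\frac{4\cdot sum_x\cdot sum_y}{b}$.
   Context: An X2Y mapping schema for lists $X$ and $Y$ with capacity $q$ is an assignment of the inputs of $X\cup Y$ to a collection of reducers (each input may go to several reducers) such that every reducer receives inputs of total size at most $q$ and for every $x\in X$ and $y\in Y$ there is a reducer receiving both. The communication cost is the sum over reducers of the total size of the inputs assigned to it. *)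

theory Defs
  imports Complex_Main "HOL-Library.Multiset"
begin

definition load :: "('a \<Rightarrow> real) \<Rightarrow> 'a list \<Rightarrow> real" where
  "load w bin = sum_list (map w bin)"

fun ff_insert :: "real \<Rightarrow> ('a \<Rightarrow> real) \<Rightarrow> 'a \<Rightarrow> 'a list list \<Rightarrow> 'a list list" where
  "ff_insert c w x [] = [[x]]"
| "ff_insert c w x (bin # bins) =
     (if load w bin + w x \<le> c then (x # bin) # bins else bin # ff_insert c w x bins)"

definition bf_insert :: "real \<Rightarrow> ('a \<Rightarrow> real) \<Rightarrow> 'a \<Rightarrow> 'a list list \<Rightarrow> 'a list list" where
  "bf_insert c w x bins =
     (let fits = filter (\<lambda>i. load w (bins ! i) + w x \<le> c) [0..<length bins] in
      if fits = [] then bins @ [[x]]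
      else let m = Max ((\<lambda>i. load w (bins ! i)) ` set fits);
               i = hd (filter (\<lambda>i. load w (bins ! i) = m) fits)
           in bins[i := x # (bins ! i)])"

definition pack :: "('a \<Rightarrow> 'a list list \<Rightarrow> 'a list list) \<Rightarrow> 'a list \<Rightarrow> 'a list list" where
  "pack ins xs = foldl (\<lambda>bins x. ins x bins) [] xs"

definition decreasing_order :: "('a \<Rightarrow> real) \<Rightarrow> 'a list \<Rightarrow> 'a list \<Rightarrow> bool" where
  "decreasing_order w xs xs' \<longleftrightarrow> mset xs' = mset xs \<and> sorted_wrt (\<lambda>a c. w a \<ge> w c) xs'"

text \<open>First-Fit Decreasing / Best-Fit Decreasing with bin capacity c, w.r.t. a decreasing order xs'.\<close>
definition ffd :: "real \<Rightarrow> ('a \<Rightarrow> real) \<Rightarrow> 'a list \<Rightarrow> 'a list list" where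
  "ffd c w xs' = pack (ff_insert c w) xs'"

definition bfd :: "real \<Rightarrow> ('a \<Rightarrow> real) \<Rightarrow> 'a list \<Rightarrow> 'a list list" where
  "bfd c w xs' = pack (bf_insert c w) xs'"

text \<open>Reducers: one reducer per pair (X-bin, Y-bin), receiving all inputs of both bins.
  A mapping schema is a list of reducers, each reducer being the set of inputs assigned to it.\<close>
definition pair_reducers :: "'a list list \<Rightarrow> 'a list list \<Rightarrow> 'a set list" where
  "pair_reducers BX BY = [set bx \<union> set by. bx \<leftarrow> BX, by \<leftarrow> BY]"

definition x2y_mapping_schema ::
  "real \<Rightarrow> ('a \<Rightarrow> real) \<Rightarrow> 'a list \<Rightarrow> 'a list \<Rightarrow> 'a set list \<Rightarrow> bool" where
  "x2y_mapping_schema q w X Y R \<longleftrightarrow>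
     (\<forall>r\<in>set R. r \<subseteq> set X \<union> set Y \<and> sum w r \<le> q) \<and>
     (\<forall>x\<in>set X. \<forall>y\<in>set Y. \<exists>r\<in>set R. x \<in> r \<and> y \<in> r)"

definition comm_cost :: "('a \<Rightarrow> real) \<Rightarrow> 'a set list \<Rightarrow> real" where
  "comm_cost w R = sum_list (map (\<lambda>r. sum w r) R)"

end

theory Submission
  imports Defs
begin

lemma ff_char:
  "ff_insert c w x bins = bins @ [[x]] \<and> (\<forall>bin\<in>set bins. load w bin + w x > c) \<or>
   (\<exists>i<length bins. load w (bins!i) + w x \<le> c \<and> ff_insert c w x bins = bins[i := x # bins!i])"
proof (induction bins)
  case Nil
  then show ?case by simp
next
  case (Cons bin bins)
  show ?case
  proof (cases "load w bin + w x \<le> c")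
    case True
    then show ?thesis by (intro disjI2 exI[of _ 0]) auto
  next
    case False
    from Cons.IH show ?thesis
    proof
      assume "ff_insert c w x bins = bins @ [[x]] \<and> (\<forall>bin\<in>set bins. load w bin + w x > c)"
      then show ?thesis using False by auto
    next
      assume "\<exists>i<length bins. load w (bins!i) + w x \<le> c \<and> ff_insert c w x bins = bins[i := x # bins!i]"
      then obtain i where "i<length bins" "load w (bins!i) + w x \<le> c" "ff_insert c w x bins = bins[i := x # bins!i]" by blast
      then show ?thesis using False by (intro disjI2 exI[of _ "Suc i"]) auto
    qed
  qed
qed

lemma bf_char:
  "bf_insert c w x bins = bins @ [[x]] \<and> (\<forall>bin\<in>set bins. load w bin + w x > c) \<or>
   (\<exists>i<length bins. load w (bins!i) + w x \<le> c \<and> bf_insert c w x bins = bins[i := x # bins!i])"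
proof -
  define fits where "fits = filter (\<lambda>i. load w (bins ! i) + w x \<le> c) [0..<length bins]"
  show ?thesis
  proof (cases "fits = []")
    case True
    have "\<forall>bin\<in>set bins. load w bin + w x > c"
    proof
      fix bin assume "bin \<in> set bins"
      then obtain j where "j < length bins" "bins ! j = bin" by (auto simp: in_set_conv_nth)
      then show "load w bin + w x > c" using True unfolding fits_def
        by (metis (mono_tags, lifting) atLeastLessThan_iff filter_empty_conv not_le set_upt zero_le)
    qed
    then show ?thesis using True unfolding bf_insert_def fits_def[symmetric] by simp
  next
    case False
    define m where "m = Max ((\<lambda>i. load w (bins ! i)) ` set fits)"
    define i where "i = hd (filter (\<lambda>i. load w (bins ! i) = m) fits)"
    have "m \<in> (\<lambda>i. load w (bins ! i)) ` set fits" unfolding m_def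
      using False by (intro Max_in) auto
    then have "filter (\<lambda>i. load w (bins ! i) = m) fits \<noteq> []"
      by (auto simp: filter_empty_conv)
    then have "i \<in> set (filter (\<lambda>i. load w (bins ! i) = m) fits)" unfolding i_def
      by (rule hd_in_set)
    then have "i \<in> set fits" by simp
    then have "i < length bins" "load w (bins!i) + w x \<le> c" unfolding fits_def by auto
    moreover have "bf_insert c w x bins = bins[i := x # bins!i]"
      using False unfolding bf_insert_def fits_def[symmetric] m_def[symmetric] i_def[symmetric]
      by (simp add: Let_def m_def i_def)
    ultimately show ?thesis by blast
  qed
qed

definition inv :: "real \<Rightarrow> ('a \<Rightarrow> real) \<Rightarrow> 'a list list \<Rightarrow> bool" where
  "inv c w B \<longleftrightarrow> (\<forall>bin\<in>set B. load w bin \<le> c) \<and>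
     (\<forall>i j. i < j \<and> j < length B \<longrightarrow> load w (B!i) + load w (B!j) > c)"

lemma load_cons[simp]: "load w (x # b) = w x + load w b"
  by (simp add: load_def)

lemma mset_concat_upd:
  assumes "i < length B"
  shows "mset (concat (B[i := x # B!i])) = mset (concat B) + {#x#}"
proof -
  have B: "B = take i B @ B!i # drop (Suc i) B" using assms by (simp add: id_take_nth_drop)
  have "B[i := x # B!i] = take i B @ (x # B!i) # drop (Suc i) B"
    using assms by (simp add: upd_conv_take_nth_drop)
  then show ?thesis by (subst (2) B) simp
qed

lemma inv_step:
  assumes I: "inv c w B" and wx: "0 \<le> w x" "w x \<le> c"
    and ch: "R = B @ [[x]] \<and> (\<forall>bin\<in>set B. load w bin + w x > c) \<or>
   (\<exists>i<length B. load w (B!i) + w x \<le> c \<and> R = B[i := x # B!i])"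
  shows "inv c w R \<and> mset (concat R) = mset (concat B) + {#x#}"
  using ch
proof
  assume A: "R = B @ [[x]] \<and> (\<forall>bin\<in>set B. load w bin + w x > c)"
  have "inv c w R" unfolding inv_def
  proof (intro conjI allI impI)
    show "\<forall>bin\<in>set R. load w bin \<le> c" using A I wx by (auto simp: inv_def load_def)
    fix i j assume ij: "i < j \<and> j < length R"
    show "load w (R!i) + load w (R!j) > c"
    proof (cases "j = length B")
      case True
      then have "i < length B" using ij by simp
      then show ?thesis using A True by (auto simp: nth_append load_def)
    next
      case False
      then show ?thesis using A I ij by (auto simp: inv_def nth_append)
    qed
  qed
  then show ?thesis using A by simp
next
  assume "\<exists>i<length B. load w (B!i) + w x \<le> c \<and> R = B[i := x # B!i]"
  then obtain k where k: "k < length B" "load w (B!k) + w x \<le> c" "R = B[k := x # B!k]" by blast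
  have ge: "load w (R!j) \<ge> load w (B!j)" if "j < length B" for j
    using k wx that by (cases "j = k") auto
  have "inv c w R" unfolding inv_def
  proof (intro conjI allI impI)
    show "\<forall>bin\<in>set R. load w bin \<le> c"
    proof
      fix bin assume "bin \<in> set R"
      then obtain j where j: "j < length R" "R!j = bin" by (auto simp: in_set_conv_nth)
      show "load w bin \<le> c"
      proof (cases "j = k")
        case True then show ?thesis using j k by (auto simp: add.commute)
      next
        case False then show ?thesis using j k I by (auto simp: inv_def)
      qed
    qed
    fix i j assume ij: "i < j \<and> j < length R"
    then have "load w (B!i) + load w (B!j) > c" using I k by (auto simp: inv_def)
    moreover have "load w (R!i) \<ge> load w (B!i)" "load w (R!j) \<ge> load w (B!j)"
      using ij k ge by auto
    ultimately show "load w (R!i) + load w (R!j) > c" by linarith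
  qed
  then show ?thesis using k mset_concat_upd by auto
qed

lemma pack_inv:
  assumes ins: "\<And>x B. ins x B = B @ [[x]] \<and> (\<forall>bin\<in>set B. load w bin + w x > c) \<or>
   (\<exists>i<length B. load w (B!i) + w x \<le> c \<and> ins x B = B[i := x # B!i])"
    and ws: "\<forall>x\<in>set xs. 0 \<le> w x \<and> w x \<le> c"
  shows "inv c w (pack ins xs) \<and> mset (concat (pack ins xs)) = mset xs"
  using ws unfolding pack_def
proof (induction xs rule: rev_induct)
  case Nil
  then show ?case by (simp add: inv_def)
next
  case (snoc x xs)
  then have IH: "inv c w (foldl (\<lambda>bins x. ins x bins) [] xs) \<and>
     mset (concat (foldl (\<lambda>bins x. ins x bins) [] xs)) = mset xs" by simp
  show ?case using inv_step[OF conjunct1[OF IH] _ _ ins] IH snoc.prems by simp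
qed

lemma count_bound:
  "(\<forall>i j. i < j \<and> j < length B \<longrightarrow> l (B!i) + l (B!j) > c) \<Longrightarrow> length B \<ge> 2 \<Longrightarrow>
   real (length B) * c \<le> 2 * sum_list (map l B)"
proof (induction "length B" arbitrary: B rule: less_induct)
  case less
  then obtain a b rest where B: "B = a # b # rest"
    by (metis One_nat_def Suc_1 Suc_le_length_iff)
  have ab: "l a + l b > c" using less.prems(1)[rule_format, of 0 1] B by simp
  show ?case
  proof (cases rest)
    case Nil then show ?thesis using B ab by simp
  next
    case (Cons d rest')
    show ?thesis
    proof (cases rest')
      case Nil
      have "l a + l d > c" using less.prems(1)[rule_format, of 0 2] B Cons Nil by simp
      moreover have "l b + l d > c" using less.prems(1)[rule_format, of 1 2] B Cons Nil by simp
      ultimately show ?thesis using ab B Cons Nil by simp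
    next
      case (Cons e r2)
      have P: "\<forall>i j. i < j \<and> j < length rest \<longrightarrow> l (rest!i) + l (rest!j) > c"
      proof (intro allI impI)
        fix i j assume "i < j \<and> j < length rest"
        then show "l (rest!i) + l (rest!j) > c"
          using less.prems(1)[rule_format, of "Suc (Suc i)" "Suc (Suc j)"] B by simp
      qed
      have "real (length rest) * c \<le> 2 * sum_list (map l rest)"
        using less.hyps[OF _ P] B \<open>rest = d # rest'\<close> Cons by simp
      then show ?thesis using B ab by (simp add: algebra_simps)
    qed
  qed
qed

lemma len_pairs: "length (concat (map (\<lambda>a. map (f a) B) A)) = length A * length B"
  by (induction A) auto


lemma alg_props:
  assumes "alg = ffd \<or> alg = bfd" and "\<forall>x\<in>set xs. 0 \<le> w x \<and> w x \<le> c"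
  shows "inv c w (alg c w xs) \<and> mset (concat (alg c w xs)) = mset xs"
  using assms(1)
proof
  assume "alg = ffd"
  then show ?thesis unfolding ffd_def using pack_inv[OF ff_char assms(2)] by simp
next
  assume "alg = bfd"
  then show ?thesis unfolding bfd_def using pack_inv[OF bf_char assms(2)] by simp
qed

lemma bins_bound:
  assumes "inv c w B" "c > 0" "sum_list (map (load w) B) > 2 * c"
  shows "real (length B) \<le> 2 * sum_list (map (load w) B) / c"
proof (cases "length B \<ge> 2")
  case True
  have "real (length B) * c \<le> 2 * sum_list (map (load w) B)"
    using count_bound[where B=B and l="load w" and c=c] assms(1) True unfolding inv_def by blast
  then show ?thesis using assms(2) by (simp add: field_simps)
next
  case False
  then have "real (length B) \<le> 1" by simp
  also have "1 \<le> 2 * sum_list (map (load w) B) / c" using assms by (simp add: field_simps)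
  finally show ?thesis .
qed

lemma sum_loads: "sum_list (map (load w) B) = sum_list (map w (concat B))"
  by (induction B) (auto simp: load_def)

lemma sum_pairs_aux:
  "(\<Sum>bx\<leftarrow>A. \<Sum>yb\<leftarrow>B. (f bx + g yb :: real)) =
   real (length B) * sum_list (map f A) + real (length A) * sum_list (map g B)"
proof (induction A)
  case Nil then show ?case by simp
next
  case (Cons a A)
  have "(\<Sum>yb\<leftarrow>B. f a + g yb) = real (length B) * f a + sum_list (map g B)"
    by (induction B) (auto simp: algebra_simps)
  then show ?case using Cons by (simp add: algebra_simps)
qed

lemma comm_pairs:
  "comm_cost w [set bx \<union> set yb. bx \<leftarrow> BX, yb \<leftarrow> BY] =
   (\<Sum>bx\<leftarrow>BX. \<Sum>yb\<leftarrow>BY. sum w (set bx \<union> set yb))"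
  unfolding comm_cost_def by (induction BX) (auto simp: comp_def)

theorem theorem15:
  fixes b q :: real and w :: "'a \<Rightarrow> real" and X Y Xs Ys :: "'a list"
    and alg :: "real \<Rightarrow> ('a \<Rightarrow> real) \<Rightarrow> 'a list \<Rightarrow> 'a list list"
  assumes "b > 0" and "q = 2 * b"
    and "distinct X" and "distinct Y" and "set X \<inter> set Y = {}"
    and "\<forall>x\<in>set X \<union> set Y. 0 < w x \<and> w x \<le> b"
    and "sum_list (map w X) > q" and "sum_list (map w Y) > q"
    and "alg = ffd \<or> alg = bfd"
    and "decreasing_order w X Xs" and "decreasing_order w Y Ys"
  shows "x2y_mapping_schema q w X Y (pair_reducers (alg b w Xs) (alg b w Ys)) \<and>
         real (length (pair_reducers (alg b w Xs) (alg b w Ys)))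
           \<le> 4 * sum_list (map w X) * sum_list (map w Y) / b ^ 2 \<and>
         comm_cost w (pair_reducers (alg b w Xs) (alg b w Ys))
           \<le> 4 * sum_list (map w X) * sum_list (map w Y) / b"
proof -
  define BX where "BX = alg b w Xs"
  define BY where "BY = alg b w Ys"
  define Sx where "Sx = sum_list (map w X)"
  define Sy where "Sy = sum_list (map w Y)"
  have mX: "mset Xs = mset X" and mY: "mset Ys = mset Y"
    using assms(10,11) unfolding decreasing_order_def by auto
  have sX: "set Xs = set X" and sY: "set Ys = set Y"
    using mX mY by (metis set_mset_mset)+
  have wXs: "\<forall>x\<in>set Xs. 0 \<le> w x \<and> w x \<le> b" and wYs: "\<forall>x\<in>set Ys. 0 \<le> w x \<and> w x \<le> b"
    using assms(6) sX sY by (auto simp: less_imp_le)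
  from alg_props[OF assms(9) wXs] have IX: "inv b w BX" and MX: "mset (concat BX) = mset X"
    unfolding BX_def using mX by auto
  from alg_props[OF assms(9) wYs] have IY: "inv b w BY" and MY: "mset (concat BY) = mset Y"
    unfolding BY_def using mY by auto
  have cX: "set (concat BX) = set X" and cY: "set (concat BY) = set Y"
    using MX MY by (metis set_mset_mset)+
  have dX: "distinct (concat BX)" using MX assms(3) by (metis distinct_count_atmost_1 set_mset_mset count_mset)
  have dY: "distinct (concat BY)" using MY assms(4) by (metis distinct_count_atmost_1 set_mset_mset count_mset)
  have SX: "sum_list (map (load w) BX) = Sx" unfolding sum_loads Sx_def
    using MX by (metis mset_map sum_mset_sum_list)
  have SY: "sum_list (map (load w) BY) = Sy" unfolding sum_loads Sy_def
    using MY by (metis mset_map sum_mset_sum_list)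
  have kx: "real (length BX) \<le> 2 * Sx / b"
    using bins_bound[OF IX assms(1)] SX assms(2,7) Sx_def by simp
  have ky: "real (length BY) \<le> 2 * Sy / b"
    using bins_bound[OF IY assms(1)] SY assms(2,8) Sy_def by simp
  have Sxp: "Sx > 0" "Sy > 0" using assms(1,2,7,8) Sx_def Sy_def by auto
  have rsum: "sum w (set bx \<union> set yb) = load w bx + load w yb" if "bx \<in> set BX" "yb \<in> set BY" for bx yb
  proof -
    have "distinct bx" using dX that(1) by (simp add: distinct_concat_iff)
    moreover have "distinct yb" using dY that(2) by (simp add: distinct_concat_iff)
    moreover have "set bx \<inter> set yb = {}" using that cX cY assms(5) by auto
    ultimately show ?thesis unfolding load_def
      by (simp add: sum.union_disjoint sum_list_distinct_conv_sum_set)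
  qed
  have lbx: "load w bx \<le> b" if "bx \<in> set BX" for bx using IX that by (auto simp: inv_def)
  have lby: "load w yb \<le> b" if "yb \<in> set BY" for yb using IY that by (auto simp: inv_def)
  have schema: "x2y_mapping_schema q w X Y (pair_reducers BX BY)"
    unfolding x2y_mapping_schema_def pair_reducers_def
  proof (intro conjI ballI)
    fix r assume "r \<in> set [set bx \<union> set yb. bx \<leftarrow> BX, yb \<leftarrow> BY]"
    then obtain bx yb where r: "bx \<in> set BX" "yb \<in> set BY" "r = set bx \<union> set yb" by auto
    then show "r \<subseteq> set X \<union> set Y" using cX cY by auto
  next
    fix r assume "r \<in> set [set bx \<union> set yb. bx \<leftarrow> BX, yb \<leftarrow> BY]"
    then obtain bx yb where r: "bx \<in> set BX" "yb \<in> set BY" "r = set bx \<union> set yb" by auto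
    then show "sum w r \<le> q"
      using r rsum[OF r(1,2)] lbx[OF r(1)] lby[OF r(2)] assms(2) by auto
  next
    fix x y assume xy: "x \<in> set X" "y \<in> set Y"
    then have "x \<in> set (concat BX)" "y \<in> set (concat BY)" using cX cY by auto
    then obtain bx yb where "bx \<in> set BX" "x \<in> set bx" "yb \<in> set BY" "y \<in> set yb"
      by (auto simp only: set_concat)
    then show "\<exists>r\<in>set [set bx \<union> set yb. bx \<leftarrow> BX, yb \<leftarrow> BY]. x \<in> r \<and> y \<in> r" by force
  qed
  have len: "real (length (pair_reducers BX BY)) = real (length BX) * real (length BY)"
    unfolding pair_reducers_def by (simp add: len_pairs)
  have "real (length BX) * real (length BY) \<le> (2 * Sx / b) * (2 * Sy / b)"
    using kx ky by (intro mult_mono) auto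
  also have "\<dots> = 4 * Sx * Sy / b ^ 2" by (simp add: power2_eq_square)
  finally have lenb: "real (length (pair_reducers BX BY)) \<le> 4 * Sx * Sy / b ^ 2" using len by simp
  have "comm_cost w (pair_reducers BX BY) = (\<Sum>bx\<leftarrow>BX. \<Sum>yb\<leftarrow>BY. load w bx + load w yb)"
    unfolding pair_reducers_def comm_pairs using rsum
    by (intro arg_cong[where f=sum_list] map_cong refl) auto
  also have "\<dots> = real (length BY) * Sx + real (length BX) * Sy"
    by (simp only: sum_pairs_aux SX SY)
  also have "\<dots> \<le> (2 * Sy / b) * Sx + (2 * Sx / b) * Sy"
    using kx ky Sxp by (intro add_mono mult_right_mono) auto
  also have "\<dots> = 4 * Sx * Sy / b" by (simp add: field_simps)
  finally have cost: "comm_cost w (pair_reducers BX BY) \<le> 4 * Sx * Sy / b" .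
  show ?thesis using schema lenb cost unfolding BX_def BY_def Sx_def Sy_def by simp
qed

end
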